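(* For every positive integer $n$, the number of ordered set partitions of $[n]$ into exactly $3$ blocks that avoid the pattern $132$ is $$\operatorname{op}_{n,3}(132) = \left(\frac{n^2}{8}+\frac{3n}{8}-2\right)2^n+3.$$
   Context: An ordered set partition of $[n]$ into $k$ blocks is a sequence $B_1/B_2/\cdots/B_k$ of nonempty, pairwise disjoint subsets of $[n]$ whose union is $[n]$; the order of the blocks matters, but not the order of elements within a block. For a permutation $\rho=\rho_1\cdots\rho_m\in\mathcal{S}_m$, an ordered partition $B_1/\cdots/B_k$ contains $\rho$ if there are block indices $i_1<i_2<\cdots<i_m$ and elements $b_j\in B_{i_j}$ such that $b_1\cdots b_m$ is order-isomorphic to $\rho$ (i.e. $b_a<b_c$ iff $\rho_a<\rho_c$); otherwise it avoids $\rho$. $\operatorname{op}_{n,k}(\rho)$ denotes the number of ordered partitions of $[n]$ into $k$ blocks that avoid $\rho$. *)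

theory Defs
  imports Main Complex_Main
begin

definition ordered_partition :: "nat \<Rightarrow> nat \<Rightarrow> nat set list \<Rightarrow> bool" where
  "ordered_partition n k bs \<longleftrightarrow>
     length bs = k \<and>
     (\<forall>i<k. bs ! i \<noteq> {}) \<and>
     (\<forall>i<k. \<forall>j<k. i \<noteq> j \<longrightarrow> bs ! i \<inter> bs ! j = {}) \<and>
     (\<Union>i<k. bs ! i) = {1..n}"

definition contains_pattern :: "nat set list \<Rightarrow> nat list \<Rightarrow> bool" where
  "contains_pattern bs rho \<longleftrightarrow>
     (\<exists>idx b :: nat \<Rightarrow> nat.
        (\<forall>a c. a < c \<and> c < length rho \<longrightarrow> idx a < idx c) \<and>
        (\<forall>a < length rho. idx a < length bs \<and> b a \<in> bs ! idx a) \<and>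
        (\<forall>a < length rho. \<forall>c < length rho. (b a < b c \<longleftrightarrow> rho ! a < rho ! c)))"

definition op_count :: "nat \<Rightarrow> nat \<Rightarrow> nat list \<Rightarrow> nat" where
  "op_count n k rho = card {bs. ordered_partition n k bs \<and> \<not> contains_pattern bs rho}"

end

theory Submission imports Defs begin

fun ok :: "nat \<Rightarrow> nat list \<Rightarrow> bool" where
  "ok s [] = True"
| "ok s (x#w) = (if s = 0 then (if x = 0 then ok 1 w else ok 0 w)
                 else if s = 1 then (if x = 2 then ok 2 w else ok 1 w)
                 else (x \<noteq> 1 \<and> ok 2 w))"

definition L :: "nat \<Rightarrow> nat list set" where
  "L n = {w. set w \<subseteq> {0,1,2} \<and> length w = n}"

lemma finite_L: "finite (L n)"
  unfolding L_def by (rule finite_lists_length_eq) simp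

lemma L_Suc_split:
  "{w \<in> L (Suc n). P w} = ((#) 0 ` {w \<in> L n. P (0#w)}) \<union> ((#) 1 ` {w \<in> L n. P (1#w)})
      \<union> ((#) 2 ` {w \<in> L n. P (2#w)})"
  (is "?A = ?B")
proof
  show "?A \<subseteq> ?B"
  proof
    fix w assume "w \<in> ?A"
    then obtain x v where w: "w = x # v" and "x \<in> {0,1,2}" "v \<in> L n" "P w"
      unfolding L_def by (cases w) auto
    then show "w \<in> ?B" by auto
  qed
  show "?B \<subseteq> ?A" unfolding L_def by auto
qed

lemma card_L_Suc:
  "card {w \<in> L (Suc n). P w} = card {w \<in> L n. P (0#w)} + card {w \<in> L n. P (1#w)}
      + card {w \<in> L n. P (2#w)}"
proof -
  have f: "finite {w \<in> L n. Q w}" for Q using finite_L by simp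
  have c: "card ((#) x ` {w \<in> L n. Q w}) = card {w \<in> L n. Q w}" for x Q
    by (rule card_image) (auto simp: inj_on_def)
  show ?thesis
    unfolding L_Suc_split
    by (subst card_Un_disjoint, use f in auto) (subst card_Un_disjoint, use f in \<open>auto simp: c\<close>)
qed

definition C :: "nat \<Rightarrow> nat \<Rightarrow> nat" where
  "C s n = card {w \<in> L n. ok s w}"

lemma C0: "C s 0 = 1"
proof -
  have "{w \<in> L 0. ok s w} = {[]}" unfolding L_def by auto
  then show ?thesis unfolding C_def by simp
qed

lemma C2: "C 2 n = 2 ^ n"
proof (induction n)
  case 0 then show ?case by (simp add: C0)
next
  case (Suc n)
  have "C 2 (Suc n) = C 2 n + C 2 n"
    unfolding C_def by (subst card_L_Suc) simp
  then show ?case using Suc by simp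
qed

lemma C1: "2 * C 1 n = 2 ^ n * (n + 2)"
proof (induction n)
  case 0 then show ?case by (simp add: C0)
next
  case (Suc n)
  have "C 1 (Suc n) = C 1 n + C 1 n + C 2 n"
    unfolding C_def by (subst card_L_Suc) simp
  then show ?case using Suc by (simp add: C2 algebra_simps)
qed

lemma C0n: "8 * C 0 n = 2 ^ n * (n^2 + 3*n + 8)"
proof (induction n)
  case 0 then show ?case by (simp add: C0)
next
  case (Suc n)
  have "C 0 (Suc n) = C 1 n + C 0 n + C 0 n"
    unfolding C_def by (subst card_L_Suc) simp
  then have "8 * C 0 (Suc n) = 4 * (2 * C 1 n) + 2 * (8 * C 0 n)" by simp
  then show ?case using Suc C1[of n] by (simp add: algebra_simps power2_eq_square)
qed


lemma ex2_Cons: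
  "(\<exists>z y. z < y \<and> y < length (a#w) \<and> P ((a#w)!z) ((a#w)!y)) \<longleftrightarrow>
   (\<exists>y<length w. P a (w!y)) \<or> (\<exists>z y. z < y \<and> y < length w \<and> P (w!z) (w!y))"
  (is "?L \<longleftrightarrow> ?R")
proof
  assume ?L
  then obtain z y where h: "z < y" "y < length (a#w)" "P ((a#w)!z) ((a#w)!y)" by blast
  then obtain y' where y: "y = Suc y'" by (cases y) auto
  show ?R
  proof (cases z)
    case 0 then show ?thesis using h y by auto
  next
    case (Suc z') then show ?thesis using h y by auto
  qed
next
  assume ?R
  then show ?L
  proof
    assume "\<exists>y<length w. P a (w!y)"
    then obtain y where "y < length w" "P a (w!y)" by blast
    then show ?L by (intro exI[of _ 0] exI[of _ "Suc y"]) auto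
  next
    assume "\<exists>z y. z < y \<and> y < length w \<and> P (w!z) (w!y)"
    then obtain z y where "z < y" "y < length w" "P (w!z) (w!y)" by blast
    then show ?L by (intro exI[of _ "Suc z"] exI[of _ "Suc y"]) auto
  qed
qed

lemma ex3_Cons:
  "(\<exists>x z y. x < z \<and> z < y \<and> y < length (a#w) \<and> P ((a#w)!x) ((a#w)!z) ((a#w)!y)) \<longleftrightarrow>
   (\<exists>z y. z < y \<and> y < length w \<and> P a (w!z) (w!y)) \<or>
   (\<exists>x z y. x < z \<and> z < y \<and> y < length w \<and> P (w!x) (w!z) (w!y))"
  (is "?L \<longleftrightarrow> ?R")
proof
  assume ?L
  then obtain x z y where h: "x < z" "z < y" "y < length (a#w)" "P ((a#w)!x) ((a#w)!z) ((a#w)!y)" by blast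
  then obtain y' z' where y: "y = Suc y'" "z = Suc z'" by (cases y; cases z) auto
  show ?R
  proof (cases x)
    case 0 then show ?thesis using h y by auto
  next
    case (Suc x') then show ?thesis using h y by auto
  qed
next
  assume ?R
  then show ?L
  proof
    assume "\<exists>z y. z < y \<and> y < length w \<and> P a (w!z) (w!y)"
    then obtain z y where "z < y" "y < length w" "P a (w!z) (w!y)" by blast
    then show ?L by (intro exI[of _ 0] exI[of _ "Suc z"] exI[of _ "Suc y"]) auto
  next
    assume "\<exists>x z y. x < z \<and> z < y \<and> y < length w \<and> P (w!x) (w!z) (w!y)"
    then obtain x z y where "x < z" "z < y" "y < length w" "P (w!x) (w!z) (w!y)" by blast
    then show ?L by (intro exI[of _ "Suc x"] exI[of _ "Suc z"] exI[of _ "Suc y"]) auto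
  qed
qed

lemma ok2: "ok 2 w \<longleftrightarrow> 1 \<notin> set w"
  by (induction w) auto

lemma ok1: "ok 1 w \<longleftrightarrow> \<not> (\<exists>z y. z < y \<and> y < length w \<and> w!z = 2 \<and> w!y = 1)"
proof (induction w)
  case Nil then show ?case by simp
next
  case (Cons a w)
  show ?case
    using ex2_Cons[of a w "\<lambda>u v. u = 2 \<and> v = 1"] Cons
    by (auto simp: ok2 in_set_conv_nth)
qed

definition bad :: "nat list \<Rightarrow> bool" where
  "bad w \<longleftrightarrow> (\<exists>x z y. x < z \<and> z < y \<and> y < length w \<and> w!x = 0 \<and> w!z = 2 \<and> w!y = 1)"

lemma ok0: "ok 0 w \<longleftrightarrow> \<not> bad w"
proof (induction w)
  case Nil then show ?case by (simp add: bad_def)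
next
  case (Cons a w)
  have e: "bad (a#w) \<longleftrightarrow> (a = 0 \<and> (\<exists>z y. z < y \<and> y < length w \<and> w!z = 2 \<and> w!y = 1)) \<or> bad w"
    unfolding bad_def
    using ex3_Cons[of a w "\<lambda>u v t. u = 0 \<and> v = 2 \<and> t = 1"] by blast
  have o: "ok 0 (a#w) = (if a = 0 then ok 1 w else ok 0 w)" by simp
  show ?case
  proof (cases "a = 0")
    case True
    have "bad w \<Longrightarrow> (\<exists>z y. z < y \<and> y < length w \<and> w!z = 2 \<and> w!y = 1)"
      unfolding bad_def by blast
    moreover have "ok 0 (a#w) = ok 1 w" using o True by simp
    ultimately show ?thesis using True e ok1[of w] by blast
  next
    case False
    then show ?thesis using e o Cons by simp
  qed
qed


lemma card_NS:
  assumes "n \<ge> 1"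
  shows "card {w \<in> L n. set w \<noteq> {0,1,2}} + 3 = 3 * 2 ^ n"
proof -
  define A where "A S = {w. set w \<subseteq> S \<and> length w = n}" for S :: "nat set"
  have cA: "card (A S) = card S ^ n" if "finite S" for S unfolding A_def using that by (rule card_lists_length_eq)
  have fA: "finite (A S)" if "finite S" for S unfolding A_def using that by (rule finite_lists_length_eq)
  have NS: "{w \<in> L n. set w \<noteq> {0,1,2}} = A {1,2} \<union> A {0,2} \<union> A {0,1}"
  proof
    have sub: "A S \<subseteq> {w \<in> L n. set w \<noteq> {0,1,2}}" if "S \<subseteq> {0,1,2}" "x \<in> {0,1,2}" "x \<notin> S" for S x
    proof
      fix w assume "w \<in> A S"
      then have "set w \<subseteq> S" "length w = n" unfolding A_def by auto
      then show "w \<in> {w \<in> L n. set w \<noteq> {0,1,2}}" using that unfolding L_def by blast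
    qed
    have "A {1,2} \<subseteq> {w \<in> L n. set w \<noteq> {0,1,2}}" by (rule sub[of _ 0]) auto
    moreover have "A {0,2} \<subseteq> {w \<in> L n. set w \<noteq> {0,1,2}}" by (rule sub[of _ 1]) auto
    moreover have "A {0,1} \<subseteq> {w \<in> L n. set w \<noteq> {0,1,2}}" by (rule sub[of _ 2]) auto
    ultimately show "A {1,2} \<union> A {0,2} \<union> A {0,1} \<subseteq> {w \<in> L n. set w \<noteq> {0,1,2}}" by blast
  next
    show "{w \<in> L n. set w \<noteq> {0,1,2}} \<subseteq> A {1,2} \<union> A {0,2} \<union> A {0,1}"
    proof
      fix w assume w: "w \<in> {w \<in> L n. set w \<noteq> {0,1,2}}"
      then have s: "set w \<subseteq> {0,1,2}" "length w = n" "set w \<noteq> {0,1,2}" unfolding L_def by auto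
      then have "0 \<notin> set w \<or> 1 \<notin> set w \<or> 2 \<notin> set w" by blast
      then show "w \<in> A {1,2} \<union> A {0,2} \<union> A {0,1}"
      proof (elim disjE)
        assume "0 \<notin> set w" then have "set w \<subseteq> {1,2}" using s by blast
        then show ?thesis using s unfolding A_def by blast
      next
        assume "1 \<notin> set w" then have "set w \<subseteq> {0,2}" using s by blast
        then show ?thesis using s unfolding A_def by blast
      next
        assume "2 \<notin> set w" then have "set w \<subseteq> {0,1}" using s by blast
        then show ?thesis using s unfolding A_def by blast
      qed
    qed
  qed
  have Aint: "A S \<inter> A T = A (S \<inter> T)" for S T unfolding A_def by blast
  have s1: "{1,2} \<inter> {0,2} = {2::nat}" "{1,2} \<inter> {0,1} = {1::nat}" "{1} \<inter> {0} = ({}::nat set)" by auto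
  have i1: "A {1,2} \<inter> A {0,2} = A {2}" using Aint s1 by metis
  have i4: "(A {1,2} \<union> A {0,2}) \<inter> A {0,1} = A {1} \<union> A {0}"
    unfolding Int_Un_distrib2 Aint by (simp add: s1(2))
  have i5: "A {1} \<inter> A {0} = A {}" using Aint s1 by metis
  have e: "card (A {}) = 0" using cA[of "{}"] assms by simp
  have c2: "card (A {1,2}) = 2^n" "card (A {0,2}) = 2^n" "card (A {0,1}) = 2^n"
    using cA[of "{1,2}"] cA[of "{0,2}"] cA[of "{0,1}"] by (simp_all add: numeral_2_eq_2)
  have c1: "card (A {2}) = 1" "card (A {1}) = 1" "card (A {0}) = 1"
    using cA[of "{2}"] cA[of "{1}"] cA[of "{0}"] by simp_all
  have u1: "card (A {1,2} \<union> A {0,2}) + 1 = 2 * 2 ^ n"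
    using card_Un_Int[OF fA fA, of "{1,2}" "{0,2}"] i1 c2 c1 by simp
  have u2: "card (A {1} \<union> A {0}) = 2"
    using card_Un_Int[OF fA fA, of "{1}" "{0}"] i5 c1 e by simp
  have u3: "card (A {1,2} \<union> A {0,2} \<union> A {0,1}) + card (A {1} \<union> A {0}) = card (A {1,2} \<union> A {0,2}) + card (A {0,1})"
    using card_Un_Int[of "A {1,2} \<union> A {0,2}" "A {0,1}"] fA i4 by simp
  show ?thesis unfolding NS using u1 u2 u3 c2 by simp
qed

lemma card_W:
  assumes "n \<ge> 1"
  shows "card {w \<in> L n. set w = {0,1,2} \<and> ok 0 w} + 3 * 2 ^ n = C 0 n + 3"
proof -
  have sub: "{w \<in> L n. set w \<noteq> {0,1,2}} \<subseteq> {w \<in> L n. ok 0 w}"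
  proof
    fix w assume w: "w \<in> {w \<in> L n. set w \<noteq> {0,1,2}}"
    have "\<not> bad w"
    proof
      assume "bad w"
      then obtain x z y where "x < z" "z < y" "y < length w" "w!x = 0" "w!z = 2" "w!y = 1"
        unfolding bad_def by blast
      then have "0 \<in> set w" "1 \<in> set w" "2 \<in> set w" by (metis nth_mem order.strict_trans)+
      then show False using w unfolding L_def by auto
    qed
    then show "w \<in> {w \<in> L n. ok 0 w}" using w ok0 by auto
  qed
  have eq: "{w \<in> L n. set w = {0,1,2} \<and> ok 0 w} = {w \<in> L n. ok 0 w} - {w \<in> L n. set w \<noteq> {0,1,2}}"
    by auto
  have "card {w \<in> L n. set w = {0,1,2} \<and> ok 0 w} = C 0 n - card {w \<in> L n. set w \<noteq> {0,1,2}}"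
    unfolding eq C_def by (rule card_Diff_subset) (use sub finite_L in auto)
  moreover have "card {w \<in> L n. set w \<noteq> {0,1,2}} \<le> C 0 n"
    unfolding C_def by (rule card_mono) (use sub finite_L in auto)
  ultimately show ?thesis using card_NS[OF assms] by simp
qed


lemma all3: "(\<forall>a<(3::nat). P a) \<longleftrightarrow> P 0 \<and> P 1 \<and> P 2"
  by (auto simp: numeral_3_eq_3 numeral_2_eq_2 less_Suc_eq)

lemma all3s: "(\<forall>a<Suc (Suc (Suc 0)). P a) \<longleftrightarrow> P 0 \<and> P 1 \<and> P 2"
  by (auto simp: numeral_2_eq_2 less_Suc_eq)

lemma contains132:
  assumes "length bs = 3"
  shows "contains_pattern bs [1,3,2] \<longleftrightarrow> (\<exists>x\<in>bs!0. \<exists>y\<in>bs!1. \<exists>z\<in>bs!2. x < z \<and> z < y)"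
proof
  assume "contains_pattern bs [1,3,2]"
  then obtain idx b :: "nat \<Rightarrow> nat" where
    h1: "\<forall>a c. a < c \<and> c < Suc (Suc (Suc 0)) \<longrightarrow> idx a < idx c" and
    h2: "\<forall>a < Suc (Suc (Suc 0)). idx a < length bs \<and> b a \<in> bs ! idx a" and
    h3: "\<forall>a < Suc (Suc (Suc 0)). \<forall>c < Suc (Suc (Suc 0)). (b a < b c \<longleftrightarrow> [1,3,2::nat] ! a < [1,3,2] ! c)"
    unfolding contains_pattern_def by auto
  have "idx 0 < idx 1" "idx 1 < idx 2" using h1 by auto
  moreover have "idx 2 < 3" using h2[unfolded all3s] assms by simp
  ultimately
  have i: "idx 0 = 0" "idx 1 = 1" "idx 2 = 2" by auto
  have "b 0 \<in> bs!0" "b 1 \<in> bs!1" "b 2 \<in> bs!2" using h2[unfolded all3s] i by simp_all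
  moreover have "b 0 < b 2" "b 2 < b 1" using h3[unfolded all3s] by simp_all
  ultimately show "\<exists>x\<in>bs!0. \<exists>y\<in>bs!1. \<exists>z\<in>bs!2. x < z \<and> z < y" by blast
next
  assume "\<exists>x\<in>bs!0. \<exists>y\<in>bs!1. \<exists>z\<in>bs!2. x < z \<and> z < y"
  then obtain x y z where h: "x \<in> bs!0" "y \<in> bs!1" "z \<in> bs!2" "x < z" "z < y" by blast
  show "contains_pattern bs [1,3,2]"
    unfolding contains_pattern_def
    apply (rule exI[of _ "\<lambda>a. a"], rule exI[of _ "\<lambda>a. [x,y,z] ! a"])
    using h assms by (simp add: all3s numeral_2_eq_2)
qed

definition g :: "nat list \<Rightarrow> nat set list" where
  "g w = map (\<lambda>j. {Suc i | i. i < length w \<and> w!i = j}) [0..<3]"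

lemma g_nth: "j < 3 \<Longrightarrow> g w ! j = {Suc i | i. i < length w \<and> w!i = j}"
  unfolding g_def by simp

lemma length_g[simp]: "length (g w) = 3" unfolding g_def by simp

lemma mem_g: "j < 3 \<Longrightarrow> m \<in> g w ! j \<longleftrightarrow> (\<exists>i. m = Suc i \<and> i < length w \<and> w!i = j)"
  by (simp add: g_nth)

lemma g_contains: "contains_pattern (g w) [1,3,2] \<longleftrightarrow> bad w"
proof -
  have "(\<exists>x\<in>g w!0. \<exists>y\<in>g w!1. \<exists>z\<in>g w!2. x < z \<and> z < y) \<longleftrightarrow> bad w"
  proof
    assume "\<exists>x\<in>g w!0. \<exists>y\<in>g w!1. \<exists>z\<in>g w!2. x < z \<and> z < y"
    then obtain x y z where m: "x \<in> g w!0" "y \<in> g w!1" "z \<in> g w!2" and o: "x < z" "z < y" by blast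
    obtain i where i: "x = Suc i" "i < length w" "w!i = 0" using m(1) mem_g[of 0] by auto
    obtain k where k: "y = Suc k" "k < length w" "w!k = 1" using m(2) mem_g[of 1] by auto
    obtain l where l: "z = Suc l" "l < length w" "w!l = 2" using m(3) mem_g[of 2] by auto
    have "i < l" "l < k" using i k l o by auto
    then show "bad w" unfolding bad_def using i k l by blast
  next
    assume "bad w"
    then obtain i l k where h: "i < l" "l < k" "k < length w" "w!i = 0" "w!l = 2" "w!k = 1"
      unfolding bad_def by blast
    have "Suc i \<in> g w!0" using h mem_g[of 0] by auto
    moreover have "Suc k \<in> g w!1" using h mem_g[of 1] by auto
    moreover have "Suc l \<in> g w!2" using h mem_g[of 2] by auto
    moreover have "Suc i < Suc l" "Suc l < Suc k" using h by auto
    ultimately show "\<exists>x\<in>g w!0. \<exists>y\<in>g w!1. \<exists>z\<in>g w!2. x < z \<and> z < y" by blast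
  qed
  then show ?thesis using contains132[OF length_g] by simp
qed


lemma lt3_iff: "(x::nat) < 3 \<longleftrightarrow> x \<in> {0,1,2}"
  by (auto simp: numeral_3_eq_3 numeral_2_eq_2 less_Suc_eq)

lemma lt3: "set (w::nat list) \<subseteq> {0,1,2} \<Longrightarrow> i < length w \<Longrightarrow> w!i < 3"
proof -
  assume "set w \<subseteq> {0,1,2}" "i < length w"
  then have "w!i \<in> {0,1,2}" using nth_mem[of i w] by blast
  then show ?thesis by (simp only: lt3_iff)
qed

lemma g_partition:
  assumes "w \<in> L n" "set w = {0,1,2}"
  shows "ordered_partition n 3 (g w)"
  unfolding ordered_partition_def
proof (intro conjI allI impI)
  have len: "length w = n" using assms unfolding L_def by auto
  have lt: "i < n \<Longrightarrow> w!i < 3" for i using assms len lt3[of w i] by simp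
  show "length (g w) = 3" by simp
  fix i :: nat assume i: "i < 3"
  then have "i \<in> set w" using assms by auto
  then obtain k where "k < length w" "w!k = i" by (auto simp: in_set_conv_nth)
  then show "g w ! i \<noteq> {}" using mem_g[OF i, of "Suc k" w] by auto
next
  fix i j :: nat assume "i < 3" "j < 3" "i \<noteq> j"
  then show "g w ! i \<inter> g w ! j = {}" by (auto simp: g_nth)
next
  have len: "length w = n" using assms unfolding L_def by auto
  have lt: "i < n \<Longrightarrow> w!i < 3" for i using assms len lt3[of w i] by simp
  show "(\<Union>i<3. g w ! i) = {1..n}"
  proof
    show "(\<Union>i<3. g w ! i) \<subseteq> {1..n}" using len by (auto simp: g_nth)
  next
    show "{1..n} \<subseteq> (\<Union>i<3. g w ! i)"
    proof
      fix m assume "m \<in> {1..n}"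
      then obtain k where k: "m = Suc k" "k < n" by (cases m) auto
      then have "m \<in> g w ! (w!k)" using mem_g[OF lt[OF k(2)], of m w] len by auto
      then show "m \<in> (\<Union>i<3. g w ! i)" using lt[OF k(2)] by blast
    qed
  qed
qed

lemma g_inj: "inj_on g (L n)"
proof (rule inj_onI)
  fix w v assume w: "w \<in> L n" and v: "v \<in> L n" and e: "g w = g v"
  have len: "length w = n" "length v = n" using w v unfolding L_def by auto
  show "w = v"
  proof (rule nth_equalityI)
    show "length w = length v" using len by simp
    fix i assume i: "i < length w"
    have lt: "w!i < 3" using w i lt3[of w i] unfolding L_def by simp
    have "Suc i \<in> g w ! (w!i)" using mem_g[OF lt, of "Suc i" w] i by auto
    then have "Suc i \<in> g v ! (w!i)" using e by simp
    then show "w!i = v!i" using mem_g[OF lt, of "Suc i" v] by auto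
  qed
qed

lemma g_surj:
  assumes "ordered_partition n 3 bs"
  shows "\<exists>w\<in>L n. set w = {0,1,2} \<and> g w = bs"
proof -
  have len: "length bs = 3" and ne: "\<And>i. i < 3 \<Longrightarrow> bs!i \<noteq> {}"
    and dj: "\<And>i j. i < 3 \<Longrightarrow> j < 3 \<Longrightarrow> i \<noteq> j \<Longrightarrow> bs!i \<inter> bs!j = {}"
    and un: "(\<Union>i<3. bs!i) = {1..n}"
    using assms unfolding ordered_partition_def by (simp_all add: lt3_iff[symmetric])
  define w where "w = map (\<lambda>i. SOME j. j < 3 \<and> Suc i \<in> bs!j) [0..<n]"
  have lw: "length w = n" unfolding w_def by simp
  have ex: "\<exists>j. j < 3 \<and> Suc i \<in> bs!j" if "i < n" for i
  proof -
    have "Suc i \<in> {1..n}" using that by auto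
    then have "Suc i \<in> (\<Union>i<3. bs!i)" using un by simp
    then show ?thesis by blast
  qed
  have wi: "w!i < 3 \<and> Suc i \<in> bs!(w!i)" if "i < n" for i
    unfolding w_def using that someI_ex[OF ex[OF that]] by simp
  have uq: "w!i = j" if "i < n" "j < 3" "Suc i \<in> bs!j" for i j
  proof (rule ccontr)
    assume "w!i \<noteq> j"
    moreover have "Suc i \<in> bs!j \<inter> bs!(w!i)" using wi[OF that(1)] that by simp
    ultimately show False using dj[of j "w!i"] wi[OF that(1)] that by simp
  qed
  have sub: "bs!j \<subseteq> {1..n}" if "j < 3" for j
  proof -
    have "bs!j \<subseteq> (\<Union>i<3. bs!i)" using that by blast
    then show ?thesis using un by simp
  qed
  have gb: "g w ! j = bs ! j" if j: "j < 3" for j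
  proof
    show "g w ! j \<subseteq> bs ! j"
    proof
      fix m assume "m \<in> g w ! j"
      then obtain i where "m = Suc i" "i < length w" "w!i = j" using mem_g[OF j] by blast
      then show "m \<in> bs ! j" using wi[of i] lw by auto
    qed
  next
    show "bs ! j \<subseteq> g w ! j"
    proof
      fix m assume m: "m \<in> bs!j"
      then have "m \<in> {1..n}" using sub[OF j] by blast
      then obtain k where k: "m = Suc k" "k < n" by (cases m) auto
      then have "w!k = j" using uq m j by simp
      then show "m \<in> g w ! j" using k lw mem_g[OF j] by auto
    qed
  qed
  have "g w = bs"
  proof (rule nth_equalityI)
    show "length (g w) = length bs" using len by simp
    fix j assume "j < length (g w)"
    then have "j < 3" by simp
    then show "g w ! j = bs ! j" by (rule gb)
  qed
  moreover have "set w = {0,1,2}"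
  proof
    show "set w \<subseteq> {0,1,2}"
    proof
      fix x assume "x \<in> set w"
      then obtain i where "i < n" "x = w!i" using lw by (auto simp: in_set_conv_nth)
      then have "x < 3" using wi by simp
      then show "x \<in> {0,1,2}" by (simp only: lt3_iff)
    qed
  next
    show "{0,1,2} \<subseteq> set w"
    proof
      fix j :: nat assume "j \<in> {0,1,2}"
      then have j: "j < 3" by (simp only: lt3_iff)
      from ne[OF j] obtain m where m: "m \<in> bs!j" by blast
      then have "m \<in> {1..n}" using sub[OF j] by blast
      then obtain k where k: "m = Suc k" "k < n" by (cases m) auto
      then have "w!k = j" using uq m j by simp
      then show "j \<in> set w" using k lw nth_mem[of k w] by simp
    qed
  qed
  moreover have "w \<in> L n" using \<open>set w = {0,1,2}\<close> lw unfolding L_def by simp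
  ultimately show ?thesis by blast
qed

lemma op_eq:
  "{bs. ordered_partition n 3 bs \<and> \<not> contains_pattern bs [1,3,2]}
     = g ` {w \<in> L n. set w = {0,1,2} \<and> ok 0 w}"
proof
  show "{bs. ordered_partition n 3 bs \<and> \<not> contains_pattern bs [1,3,2]}
     \<subseteq> g ` {w \<in> L n. set w = {0,1,2} \<and> ok 0 w}"
  proof
    fix bs assume "bs \<in> {bs. ordered_partition n 3 bs \<and> \<not> contains_pattern bs [1,3,2]}"
    then have p: "ordered_partition n 3 bs" "\<not> contains_pattern bs [1,3,2]" by auto
    obtain w where w: "w \<in> L n" "set w = {0,1,2}" "g w = bs" using g_surj[OF p(1)] by blast
    then have "ok 0 w" using p(2) g_contains ok0 by auto
    then show "bs \<in> g ` {w \<in> L n. set w = {0,1,2} \<and> ok 0 w}" using w by blast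
  qed
next
  show "g ` {w \<in> L n. set w = {0,1,2} \<and> ok 0 w}
     \<subseteq> {bs. ordered_partition n 3 bs \<and> \<not> contains_pattern bs [1,3,2]}"
    using g_partition g_contains ok0 by auto
qed

theorem theorem3:
  fixes n :: nat
  assumes "n \<ge> 1"
  shows "real (op_count n 3 [1, 3, 2]) = ((real n)^2 / 8 + 3 * real n / 8 - 2) * 2 ^ n + 3"
proof -
  have "op_count n 3 [1,3,2] = card {w \<in> L n. set w = {0,1,2} \<and> ok 0 w}"
    unfolding op_count_def op_eq
    by (rule card_image) (rule inj_on_subset[OF g_inj], auto)
  then have a: "real (op_count n 3 [1,3,2]) + 3 * 2 ^ n = real (C 0 n) + 3"
    using card_W[OF assms] by (metis (mono_tags, lifting) of_nat_add of_nat_mult of_nat_numeral of_nat_power)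
  have b: "8 * real (C 0 n) = 2 ^ n * ((real n)^2 + 3 * real n + 8)"
    using C0n[of n] by (metis (mono_tags, lifting) of_nat_add of_nat_mult of_nat_numeral of_nat_power)
  from a b show ?thesis by (simp add: algebra_simps)
qed

end
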